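(* Let $G$ be a finite graph with no isolated vertices. If $G$ has $2N+1$ vertices and is almost Hamiltonian, then there is no nontrivial circuit injection $f:G_M\rightarrow B$ with $B$ a binary matroid. If $G$ has $2N$ vertices and is Hamiltonian, then there is no nontrivial circuit injection $f:G_M\rightarrow B$ with $B$ a binary matroid.
   Context: Graphs are undirected without loops or multiple edges. $G_M$ is the cycle matroid of $G$ (cells: edges; circuits: edge sets of cycles of $G$). A matroid is a pair $(S,\mathscr{C})$, $S\neq\emptyset$, $\mathscr{C}\subseteq 2^S$, satisfying: (I) $A,B\in\mathscr{C}$, $A\subseteq B$ implies $A=B$; (II) $A,B\in\mathscr{C}$, $a\in A\cap B$, $b\in (A\cup B)\setminus(A\cap B)$ implies there exists $D\in\mathscr{C}$ with $D\subseteq A\cup B$, $a\notin D$, $b\in D$. A matroid is binary if the symmetric difference of any two circuits is a union of pairwise disjoint circuits. A circuit injection $f:G_M\rightarrow B$ is a bijection from $E(G)$ onto the cells of $B$ sending each circuit of $G$ to a circuit of $B$; it is nontrivial if $B$ has a circuit not equal to the image of any circuit of $G$. $G$ is Hamiltonian if some circuit contains all its vertices. A graph with $n$ vertices is almost Hamiltonian if every set of $n-1$ of its vertices is contained in the vertex set of some circuit. *)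

theory Defs
  imports Main
begin

definition graph :: "'a set \<Rightarrow> 'a set set \<Rightarrow> bool" where
  "graph V E \<longleftrightarrow> finite V \<and> (\<forall>e\<in>E. \<exists>u v. u \<noteq> v \<and> u \<in> V \<and> v \<in> V \<and> e = {u, v})"

definition no_isolated_vertices :: "'a set \<Rightarrow> 'a set set \<Rightarrow> bool" where
  "no_isolated_vertices V E \<longleftrightarrow> (\<forall>v\<in>V. \<exists>e\<in>E. v \<in> e)"

definition cycle_walk :: "'a set set \<Rightarrow> 'a list \<Rightarrow> bool" where
  "cycle_walk E vs \<longleftrightarrow> distinct vs \<and> length vs \<ge> 3 \<and>
     (\<forall>i < length vs. {vs ! i, vs ! ((i + 1) mod length vs)} \<in> E)"

definition cycle_edges :: "'a list \<Rightarrow> 'a set set" where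
  "cycle_edges vs = {{vs ! i, vs ! ((i + 1) mod length vs)} | i. i < length vs}"

(* circuits of G = circuits of the cycle matroid G_M: edge sets of cycles of G *)
definition graph_circuits :: "'a set set \<Rightarrow> 'a set set set" where
  "graph_circuits E = {cycle_edges vs | vs. cycle_walk E vs}"

definition circuit_vertices :: "'a set set \<Rightarrow> 'a set" where
  "circuit_vertices C = \<Union>C"

definition hamiltonian :: "'a set \<Rightarrow> 'a set set \<Rightarrow> bool" where
  "hamiltonian V E \<longleftrightarrow> (\<exists>C\<in>graph_circuits E. V \<subseteq> circuit_vertices C)"

definition almost_hamiltonian :: "'a set \<Rightarrow> 'a set set \<Rightarrow> bool" where
  "almost_hamiltonian V E \<longleftrightarrow>
     (\<forall>W. W \<subseteq> V \<and> card W = card V - 1 \<longrightarrow> (\<exists>C\<in>graph_circuits E. W \<subseteq> circuit_vertices C))"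

definition matroid :: "'b set \<Rightarrow> 'b set set \<Rightarrow> bool" where
  "matroid S \<C> \<longleftrightarrow> S \<noteq> {} \<and> \<C> \<subseteq> Pow S \<and>
     (\<forall>A\<in>\<C>. \<forall>B\<in>\<C>. A \<subseteq> B \<longrightarrow> A = B) \<and>
     (\<forall>A\<in>\<C>. \<forall>B\<in>\<C>. \<forall>a\<in>A \<inter> B. \<forall>b\<in>(A \<union> B) - (A \<inter> B).
        \<exists>D\<in>\<C>. D \<subseteq> A \<union> B \<and> a \<notin> D \<and> b \<in> D)"

definition binary_matroid :: "'b set \<Rightarrow> 'b set set \<Rightarrow> bool" where
  "binary_matroid S \<C> \<longleftrightarrow> matroid S \<C> \<and>
     (\<forall>A\<in>\<C>. \<forall>B\<in>\<C>. \<exists>F\<subseteq>\<C>. pairwise disjnt F \<and> \<Union>F = (A - B) \<union> (B - A))"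

definition circuit_injection :: "'a set set \<Rightarrow> ('a set \<Rightarrow> 'b) \<Rightarrow> 'b set \<Rightarrow> 'b set set \<Rightarrow> bool" where
  "circuit_injection E f S \<C> \<longleftrightarrow> bij_betw f E S \<and> (\<forall>c\<in>graph_circuits E. f ` c \<in> \<C>)"

definition nontrivial_circuit_injection :: "'a set set \<Rightarrow> ('a set \<Rightarrow> 'b) \<Rightarrow> 'b set \<Rightarrow> 'b set set \<Rightarrow> bool" where
  "nontrivial_circuit_injection E f S \<C> \<longleftrightarrow> circuit_injection E f S \<C> \<and>
     (\<exists>D\<in>\<C>. \<forall>c\<in>graph_circuits E. D \<noteq> f ` c)"

end

theory Submission
  imports Defs "HOL-Library.Multiset"
begin
definition symd :: "'b set multiset \<Rightarrow> 'b set" where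
  "symd M = {x. odd (size (filter_mset (\<lambda>C. x \<in> C) M))}"

lemma symd_empty[simp]: "symd {#} = {}"
  by (simp add: symd_def)

lemma symd_add: "symd (add_mset C M) = (C - symd M) \<union> (symd M - C)"
  by (auto simp: symd_def)

lemma symd_plus: "symd (M + N) = (symd M - symd N) \<union> (symd N - symd M)"
  by (auto simp: symd_def)

lemma symd_single[simp]: "symd {#C#} = C"
  by (auto simp: symd_def)

lemma symd_mset_set_disj:
  assumes "finite F" "pairwise disjnt F"
  shows "symd (mset_set F) = \<Union>F"
proof -
  have le: "card {C\<in>F. x \<in> C} \<le> 1" for x
  proof -
    have "\<And>A B. A \<in> {C\<in>F. x \<in> C} \<Longrightarrow> B \<in> {C\<in>F. x \<in> C} \<Longrightarrow> A = B"
      using assms(2) by (auto simp: pairwise_def disjnt_def)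
    then show ?thesis using card_le_Suc0_iff_eq[of "{C\<in>F. x \<in> C}"] assms(1) by simp
  qed
  have iff: "x \<in> \<Union>F \<longleftrightarrow> card {C\<in>F. x \<in> C} \<noteq> 0" for x
    using assms(1) by auto
  have sz: "size (filter_mset (\<lambda>C. x \<in> C) (mset_set F)) = card {C\<in>F. x \<in> C}" for x
    using assms(1) by (simp add: filter_mset_mset_set)
  show ?thesis
  proof (intro set_eqI)
    fix x
    have "odd (card {C\<in>F. x \<in> C}) \<longleftrightarrow> card {C\<in>F. x \<in> C} \<noteq> 0"
      using le[of x] by (cases "card {C\<in>F. x \<in> C}") auto
    then show "x \<in> symd (mset_set F) \<longleftrightarrow> x \<in> \<Union>F"
      unfolding symd_def mem_Collect_eq sz iff by simp
  qed
qed

lemma two_sub: "A \<in># M \<Longrightarrow> B \<in># M - {#A#} \<Longrightarrow> {#A, B#} \<subseteq># M"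
  by (metis insert_DiffM insert_subset_eq_iff single_subset_iff)

lemma two_mem: "{#A, B#} \<subseteq># M \<Longrightarrow> A \<in># M \<and> B \<in># M"
  by (meson mset_subset_eq_insertD mset_subset_insertD)

lemma disj_case:
  assumes False: "\<not> (\<exists>A B. {#A, B#} \<subseteq># M \<and> A \<inter> B \<noteq> {})"
  shows "pairwise disjnt (set_mset M) \<and> \<Union>(set_mset M) = symd M"
proof
    show pw: "pairwise disjnt (set_mset M)"
      unfolding pairwise_def disjnt_def
    proof (intro ballI impI)
      fix A B assume AB: "A \<in># M" "B \<in># M" "A \<noteq> B"
      then have "B \<in># M - {#A#}" by (simp add: in_diff_count)
      then have "{#A, B#} \<subseteq># M" using two_sub[of A M B] AB(1) by blast
      then show "A \<inter> B = {}" using False by metis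
    qed
    show "\<Union>(set_mset M) = symd M"
    proof (intro set_eqI iffI)
      fix x assume "x \<in> \<Union>(set_mset M)"
      then obtain A where A: "A \<in># M" "x \<in> A" by blast
      let ?N = "filter_mset (\<lambda>C. x \<in> C) M"
      have AN: "A \<in># ?N" using A by simp
      have "?N - {#A#} = {#}"
      proof (rule ccontr)
        assume "?N - {#A#} \<noteq> {#}"
        then obtain B where B: "B \<in># ?N - {#A#}" by (metis set_mset_eq_empty_iff ex_in_conv)
        then have "{#A, B#} \<subseteq># ?N" by (rule two_sub[OF AN])
        moreover have "?N \<subseteq># M" by (rule multiset_filter_subset)
        ultimately have "{#A, B#} \<subseteq># M" by (rule subset_mset.order_trans)
        moreover have "B \<in># ?N" using B in_diffD by metis
        then have "x \<in> B" by simp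
        ultimately show False using False A(2) by (metis IntI empty_iff)
      qed
      then have "?N = {#A#}" using insert_DiffM[OF AN] by simp
      then show "x \<in> symd M" by (simp add: symd_def)
    next
      fix x assume "x \<in> symd M"
      then have "odd (size (filter_mset (\<lambda>C. x \<in> C) M))" by (simp add: symd_def)
      then have "filter_mset (\<lambda>C. x \<in> C) M \<noteq> {#}" by (metis even_zero size_empty)
      then obtain A where "A \<in># filter_mset (\<lambda>C. x \<in> C) M" by blast
      then show "x \<in> \<Union>(set_mset M)" by auto
    qed
qed

lemma binary_closure:
  assumes finC: "finite \<C>" and fin: "\<forall>C\<in>\<C>. finite C"
    and bin: "\<forall>A\<in>\<C>. \<forall>B\<in>\<C>. \<exists>F\<subseteq>\<C>. pairwise disjnt F \<and> \<Union>F = (A - B) \<union> (B - A)"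
  shows "set_mset M \<subseteq> \<C> \<Longrightarrow> \<exists>F\<subseteq>\<C>. pairwise disjnt F \<and> \<Union>F = symd M"
proof (induction "sum_mset (image_mset card M)" arbitrary: M rule: less_induct)
  case less
  show ?case
  proof (cases "\<exists>A B. {#A, B#} \<subseteq># M \<and> A \<inter> B \<noteq> {}")
    case True
    then obtain A B where AB: "{#A, B#} \<subseteq># M" "A \<inter> B \<noteq> {}" by metis
    have AC: "A \<in> \<C>" and BC: "B \<in> \<C>" using AB(1) less.prems
      using two_mem[OF AB(1)] less.prems by (meson subsetD)+
    obtain F where F: "F \<subseteq> \<C>" "pairwise disjnt F" "\<Union>F = (A - B) \<union> (B - A)"
      using bin AC BC by meson
    have finF: "finite F" using finite_subset[OF F(1) finC] .
    define M0 where "M0 = M - {#A, B#}"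
    have M: "M = M0 + {#A, B#}" using AB(1) unfolding M0_def by (metis subset_mset.diff_add)
    define M' where "M' = M0 + mset_set F"
    have finU: "\<forall>C\<in>F. finite C" using F(1) fin by (simp add: subset_iff)
    have "sum_mset (image_mset card (mset_set F)) = sum card F"
      by (simp add: sum_unfold_sum_mset)
    also have "\<dots> = card (\<Union>F)" using card_Union_disjoint[OF F(2)] finU finF by simp
    also have "\<dots> < card A + card B"
    proof -
      have fA: "finite A" "finite B" using fin AC BC by auto
      have "card ((A - B) \<union> (B - A)) \<le> card (A - B) + card (B - A)" by (rule card_Un_le)
      moreover have "card (A - B) < card A" using fA AB(2)
        by (intro psubset_card_mono) auto
      moreover have "card (B - A) \<le> card B" using fA by (simp add: card_mono)
      moreover have "card (\<Union>F) = card ((A - B) \<union> (B - A))" using F(3) by simp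
      ultimately show ?thesis by linarith
    qed
    finally have lt: "sum_mset (image_mset card M') < sum_mset (image_mset card M)"
      unfolding M M'_def by simp
    have "set_mset M' \<subseteq> \<C>" using less.prems F(1) finF unfolding M'_def M
      by auto
    from less.hyps[OF lt this] obtain G where G: "G \<subseteq> \<C>" "pairwise disjnt G" "\<Union>G = symd M'" by blast
    have "symd M' = symd M"
      unfolding M'_def M symd_plus symd_mset_set_disj[OF finF F(2)] F(3)
      by (auto simp: symd_add)
    then show ?thesis using G by auto
  next
    case False
    have "pairwise disjnt (set_mset M) \<and> \<Union>(set_mset M) = symd M" by (rule disj_case[OF False])
    then show ?thesis using less.prems by (intro exI[of _ "set_mset M"]) simp
  qed
qed

lemma cyc_intro:
  assumes "distinct vs" "length vs \<ge> 3"
    "\<forall>k. Suc k < length vs \<longrightarrow> {vs!k, vs!Suc k} \<in> X"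
    "{vs!(length vs - 1), vs!0} \<in> X" "X \<subseteq> E"
  shows "cycle_walk E vs \<and> cycle_edges vs \<subseteq> X"
proof -
  have *: "{vs!i, vs!((i+1) mod length vs)} \<in> X" if "i < length vs" for i
  proof (cases "Suc i < length vs")
    case True then show ?thesis using assms(3) by simp
  next
    case False then have i1: "i + 1 = length vs" using that by simp
    then have "i = length vs - 1" "(i+1) mod length vs = 0" by simp_all
    then show ?thesis using assms(4) by simp
  qed
  show ?thesis using * assms unfolding cycle_walk_def cycle_edges_def by auto
qed

lemma mod_suc_if: assumes "j < (n::nat)" shows "(j+1) mod n = (if j+1 < n then j+1 else 0)"
proof (cases "j+1 < n")
  case True thus ?thesis by simp
next
  case False then have "j+1 = n" using assms by simp
  thus ?thesis by simp
qed

lemma cycle_even: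
  assumes "cycle_walk E vs" shows "even (card {e \<in> cycle_edges vs. u \<in> e})"
proof -
  define n where "n = length vs"
  define ed where "ed i = {vs!i, vs!((i+1) mod n)}" for i
  have n3: "n \<ge> 3" and dist: "distinct vs" using assms by (auto simp: cycle_walk_def n_def)
  have CE: "cycle_edges vs = ed ` {..<n}" by (auto simp: cycle_edges_def ed_def n_def)
  have inj: "inj_on ed {..<n}"
  proof (rule inj_onI)
    fix i j assume i: "i \<in> {..<n}" and j: "j \<in> {..<n}" and eq: "ed i = ed j"
    have mi: "(i+1) mod n < n" "(j+1) mod n < n" using n3 by auto
    from eq have "(vs!i = vs!j \<and> vs!((i+1) mod n) = vs!((j+1) mod n)) \<or> (vs!i = vs!((j+1) mod n) \<and> vs!((i+1) mod n) = vs!j)"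
      unfolding ed_def by (auto simp: doubleton_eq_iff)
    then show "i = j"
    proof
      assume "vs!i = vs!j \<and> vs!((i+1) mod n) = vs!((j+1) mod n)"
      then show ?thesis using dist i j by (simp add: nth_eq_iff_index_eq n_def)
    next
      assume h: "vs!i = vs!((j+1) mod n) \<and> vs!((i+1) mod n) = vs!j"
      have i': "i < length vs" "j < length vs" using i j unfolding n_def by auto
      have mi': "(i+1) mod n < length vs" "(j+1) mod n < length vs" using mi unfolding n_def by auto
      have 1: "i = (j+1) mod n" using nth_eq_iff_index_eq[OF dist i'(1) mi'(2)] h by simp
      have 2: "(i+1) mod n = j" using nth_eq_iff_index_eq[OF dist mi'(1) i'(2)] h by simp
      have ji: "j < n" "i < n" using i j by auto
      have False
      proof (cases "j + 1 < n")
        case True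
        then have "i = j + 1" using 1 mod_suc_if[OF ji(1)] by simp
        then show False using 2 mod_suc_if[OF ji(2)] n3 by (auto split: if_splits)
      next
        case False
        then have "i = 0" using 1 mod_suc_if[OF ji(1)] by simp
        then show False using 2 mod_suc_if[OF ji(2)] n3 False by (auto split: if_splits)
      qed
      then show ?thesis ..
    qed
  qed
  have S: "{e \<in> cycle_edges vs. u \<in> e} = ed ` {i\<in>{..<n}. u \<in> ed i}" by (auto simp: CE)
  have "card {e \<in> cycle_edges vs. u \<in> e} = card {i\<in>{..<n}. u \<in> ed i}"
    unfolding S by (rule card_image) (rule inj_on_subset[OF inj], auto)
  moreover have "even (card {i\<in>{..<n}. u \<in> ed i})"
  proof (cases "u \<in> set vs")
    case False
    have "\<forall>i. vs!((i+1) mod n) \<in> set vs" using n3 unfolding n_def by (intro allI nth_mem mod_less_divisor) (cases vs; simp)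
    then have "{i\<in>{..<n}. u \<in> ed i} = {}" using False by (auto simp: ed_def n_def)
    then show ?thesis by (simp only: card.empty even_zero)
  next
    case True
    then obtain k where k: "k < n" "vs!k = u" by (auto simp: in_set_conv_nth n_def)
    define p where "p = (if k = 0 then n - 1 else k - 1)"
    have "{i\<in>{..<n}. u \<in> ed i} = {k, p}"
    proof (intro set_eqI iffI)
      fix i assume "i \<in> {i\<in>{..<n}. u \<in> ed i}"
      then have i: "i < n" "vs!i = u \<or> vs!((i+1) mod n) = u" by (auto simp: ed_def)
      have mi: "(i+1) mod n < n" using n3 by auto
      from i(2) have "i = k \<or> (i+1) mod n = k"
        using dist i(1) mi k by (auto simp: nth_eq_iff_index_eq n_def)
      then show "i \<in> {k, p}" using mod_suc_if[of i n] i(1) n3 unfolding p_def by (auto split: if_splits)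
    next
      fix i assume "i \<in> {k, p}"
      then show "i \<in> {i\<in>{..<n}. u \<in> ed i}"
        using k n3 mod_suc_if[of i n] unfolding p_def ed_def by (auto split: if_splits)
    qed
    moreover have "k \<noteq> p" using n3 k unfolding p_def by auto
    ultimately show ?thesis by simp
  qed
  ultimately show ?thesis by simp
qed

lemma graph_edge: "graph V E \<Longrightarrow> e \<in> E \<Longrightarrow> \<exists>a b. a \<noteq> b \<and> a \<in> V \<and> b \<in> V \<and> e = {a, b}"
  by (auto simp: graph_def)

lemma graph_finE: "graph V E \<Longrightarrow> finite E"
proof -
  assume G: "graph V E"
  then have "E \<subseteq> Pow V" by (auto simp: graph_def)
  moreover have "finite V" using G by (simp add: graph_def)
  ultimately show ?thesis by (meson finite_Pow_iff finite_subset)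
qed

lemma even_has_cycle:
  assumes G: "graph V E" and XE: "X \<subseteq> E" and ne: "X \<noteq> {}"
    and ev: "\<forall>u. even (card {e\<in>X. u\<in>e})"
  shows "\<exists>vs. cycle_walk E vs \<and> cycle_edges vs \<subseteq> X"
proof -
  have finV: "finite V" using G by (simp add: graph_def)
  have finX: "finite X" using graph_finE[OF G] XE finite_subset by blast
  define P where "P = {ps. distinct ps \<and> ps \<noteq> [] \<and> set ps \<subseteq> V \<and> (\<forall>k. Suc k < length ps \<longrightarrow> {ps!k, ps!Suc k} \<in> X)}"
  have "P \<subseteq> {ps. set ps \<subseteq> V \<and> length ps \<le> card V}"
  proof
    fix ps assume "ps \<in> P"
    then have "distinct ps" "set ps \<subseteq> V" by (auto simp: P_def)
    then show "ps \<in> {ps. set ps \<subseteq> V \<and> length ps \<le> card V}"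
      using distinct_card[of ps] card_mono[OF finV, of "set ps"] by simp
  qed
  then have finP: "finite P" using finite_lists_length_le[OF finV] finite_subset by blast
  obtain e0 where e0: "e0 \<in> X" using ne by blast
  then obtain a b where ab: "a \<noteq> b" "a \<in> V" "b \<in> V" "e0 = {a, b}" using graph_edge[OF G] XE by blast
  have abP: "[a, b] \<in> P" using ab e0 unfolding P_def by (auto simp: less_Suc_eq)
  define L where "L = Max (length ` P)"
  have "L \<in> length ` P" unfolding L_def using finP abP by (intro Max_in) auto
  then obtain ps where ps: "ps \<in> P" "length ps = L" by blast
  have maxL: "length q \<le> length ps" if "q \<in> P" for q
    using Max_ge[of "length ` P" "length q"] finP that ps(2) unfolding L_def by auto
  have len2: "length ps \<ge> 2" using maxL[OF abP] by simp
  have psd: "distinct ps" "set ps \<subseteq> V" "\<forall>k. Suc k < length ps \<longrightarrow> {ps!k, ps!Suc k} \<in> X"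
    using ps(1) by (auto simp: P_def)
  define v where "v = ps!0"
  have e1: "{v, ps!1} \<in> X" using psd(3)[rule_format, of 0] len2 unfolding v_def by simp
  have finS: "finite {e\<in>X. v\<in>e}" using finX by simp
  have "card {e\<in>X. v\<in>e} \<noteq> 0" using e1 finS by auto
  then have c2: "card {e\<in>X. v\<in>e} \<ge> 2" using ev[rule_format, of v] by presburger
  have "\<exists>e2\<in>{e\<in>X. v\<in>e}. e2 \<noteq> {v, ps!1}"
  proof (rule ccontr)
    assume "\<not> ?thesis"
    then have sub: "{e\<in>X. v\<in>e} \<subseteq> {{v, ps!1}}" by blast
    have "card {e\<in>X. v\<in>e} \<le> 1" using card_mono[OF _ sub] by simp
    then show False using c2 by simp
  qed
  then obtain e2 where e2: "e2 \<in> X" "v \<in> e2" "e2 \<noteq> {v, ps!1}" by blast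
  obtain c d where cd: "c \<noteq> d" "c \<in> V" "d \<in> V" "e2 = {c, d}" using graph_edge[OF G] XE e2(1) by blast
  obtain y where y: "e2 = {v, y}" "y \<noteq> v" "y \<in> V"
    using cd e2(2) by (metis insert_commute insertE singletonD)
  have yn1: "y \<noteq> ps!1" using y e2(3) by blast
  show ?thesis
  proof (cases "y \<in> set ps")
    case False
    have "y # ps \<in> P"
      unfolding P_def
    proof (intro CollectI conjI allI impI)
      show "distinct (y # ps)" using False psd(1) by simp
      show "y # ps \<noteq> []" by simp
      show "set (y # ps) \<subseteq> V" using y(3) psd(2) by simp
      fix k assume k: "Suc k < length (y # ps)"
      show "{(y # ps) ! k, (y # ps) ! Suc k} \<in> X"
      proof (cases k)
        case 0 then show ?thesis using e2(1) y(1) unfolding v_def by (simp add: insert_commute)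
      next
        case (Suc k') then show ?thesis using psd(3) k by simp
      qed
    qed
    then show ?thesis using maxL by fastforce
  next
    case True
    then obtain m where m: "m < length ps" "ps!m = y" by (auto simp: in_set_conv_nth)
    have m0: "m \<noteq> 0"
    proof
      assume "m = 0" then show False using m y(2) unfolding v_def by simp
    qed
    have m1: "m \<noteq> 1" using m yn1 by auto
    define vs where "vs = take (Suc m) ps"
    have lvs: "length vs = Suc m" using m unfolding vs_def by simp
    have "cycle_walk E vs \<and> cycle_edges vs \<subseteq> X"
    proof (rule cyc_intro[OF _ _ _ _ XE])
      show "distinct vs" using psd(1) unfolding vs_def by simp
      show "3 \<le> length vs" using lvs m0 m1 by simp
      show "\<forall>k. Suc k < length vs \<longrightarrow> {vs ! k, vs ! Suc k} \<in> X"
        using psd(3) lvs m unfolding vs_def by simp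
      show "{vs ! (length vs - 1), vs ! 0} \<in> X"
        using lvs m y(1) e2(1) unfolding vs_def v_def by (simp add: insert_commute)
    qed
    then show ?thesis by blast
  qed
qed

lemma cycle_edges_sub: "cycle_walk E vs \<Longrightarrow> cycle_edges vs \<subseteq> E"
  by (auto simp: cycle_walk_def cycle_edges_def)

lemma gc_sub: "c \<in> graph_circuits E \<Longrightarrow> c \<subseteq> E"
  by (auto simp: graph_circuits_def dest: cycle_edges_sub)

lemma cyc_edge_mem: "i + 1 < length vs \<Longrightarrow> {vs!i, vs!(i+1)} \<in> cycle_edges vs"
  unfolding cycle_edges_def by (intro CollectI exI[of _ i]) simp

lemma cyc_edge_last: "vs \<noteq> [] \<Longrightarrow> {vs!(length vs - 1), vs!0} \<in> cycle_edges vs"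
proof -
  assume "vs \<noteq> []"
  then have "(length vs - 1 + 1) mod length vs = 0" "length vs - 1 < length vs" by simp_all
  then show ?thesis unfolding cycle_edges_def by (intro CollectI exI[of _ "length vs - 1"]) simp
qed

lemma cycle_edges_ne: "cycle_walk E vs \<Longrightarrow> cycle_edges vs \<noteq> {}"
proof -
  assume "cycle_walk E vs"
  then have "length vs \<ge> 3" by (simp add: cycle_walk_def)
  then have "vs \<noteq> []" by (cases vs) auto
  then show ?thesis using cyc_edge_last[of vs] by auto
qed

lemma cv_set: assumes "cycle_walk E vs" shows "\<Union>(cycle_edges vs) = set vs"
proof
  have "length vs > 0" using assms by (auto simp: cycle_walk_def)
  then show "\<Union>(cycle_edges vs) \<subseteq> set vs" unfolding cycle_edges_def by auto
  show "set vs \<subseteq> \<Union>(cycle_edges vs)"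
  proof
    fix x assume "x \<in> set vs"
    then obtain i where "i < length vs" "vs!i = x" by (auto simp: in_set_conv_nth)
    then show "x \<in> \<Union>(cycle_edges vs)" unfolding cycle_edges_def by blast
  qed
qed

lemma chord_cycle0:
  assumes hs: "cycle_walk E hs" and ij: "i < j" "j < length hs"
    and e: "{hs!i, hs!j} \<in> E" "{hs!i, hs!j} \<notin> cycle_edges hs"
  shows "\<exists>c\<in>graph_circuits E. {hs!i, hs!j} \<in> c \<and> c \<subseteq> cycle_edges hs \<union> {{hs!i, hs!j}}"
proof -
  let ?H = "cycle_edges hs" and ?e = "{hs!i, hs!j}"
  have "j \<noteq> i + 1" using e(2) cyc_edge_mem[of i hs] ij by auto
  then have j2: "j \<ge> i + 2" using ij by simp
  define cl where "cl = take (j - i + 1) (drop i hs)"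
  have lcl: "length cl = j - i + 1" using ij unfolding cl_def by simp
  have clk: "cl!k = hs!(i+k)" if "k \<le> j - i" for k using that ij unfolding cl_def by simp
  have dh: "distinct hs" using hs by (simp add: cycle_walk_def)
  have "cycle_walk E cl \<and> cycle_edges cl \<subseteq> ?H \<union> {?e}"
  proof (rule cyc_intro)
    show "distinct cl" using dh unfolding cl_def by simp
    show "3 \<le> length cl" using lcl j2 by simp
    show "\<forall>k. Suc k < length cl \<longrightarrow> {cl ! k, cl ! Suc k} \<in> ?H \<union> {?e}"
    proof (intro allI impI)
      fix k assume k: "Suc k < length cl"
      then have "cl!k = hs!(i+k)" "cl!Suc k = hs!(i+k+1)" using clk[of k] clk[of "Suc k"] lcl by simp_all
      moreover have "i + k + 1 < length hs" using k lcl ij by simp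
      ultimately show "{cl ! k, cl ! Suc k} \<in> ?H \<union> {?e}" using cyc_edge_mem[of "i+k" hs] by simp
    qed
    show "{cl ! (length cl - 1), cl ! 0} \<in> ?H \<union> {?e}"
      using clk[of 0] clk[of "j - i"] lcl ij by (simp add: insert_commute)
    show "?H \<union> {?e} \<subseteq> E" using cycle_edges_sub[OF hs] e(1) by simp
  qed
  moreover have "?e \<in> cycle_edges cl"
  proof -
    have "cl \<noteq> []" using lcl by (cases cl) auto
    then show ?thesis using cyc_edge_last[of cl] clk[of 0] clk[of "j - i"] lcl ij by (simp add: insert_commute)
  qed
  ultimately show ?thesis unfolding graph_circuits_def by blast
qed

lemma chord_cycle:
  assumes hs: "cycle_walk E hs" and e: "e \<in> E" "e = {a, b}" "a \<noteq> b" "a \<in> set hs" "b \<in> set hs"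
    "e \<notin> cycle_edges hs"
  shows "\<exists>c\<in>graph_circuits E. e \<in> c \<and> c \<subseteq> cycle_edges hs \<union> {e}"
proof -
  obtain i j where ij: "i < length hs" "j < length hs" "hs!i = a" "hs!j = b"
    using e by (auto simp: in_set_conv_nth)
  have "i \<noteq> j" using ij e(3) by auto
  then show ?thesis
  proof (cases "i < j")
    case True then show ?thesis using chord_cycle0[OF hs True ij(2)] e ij by simp
  next
    case False
    then have "j < i" using \<open>i \<noteq> j\<close> by simp
    then show ?thesis using chord_cycle0[OF hs \<open>j < i\<close> ij(1)] e ij by (simp add: insert_commute)
  qed
qed

lemma star_cycle0:
  assumes hs: "cycle_walk E hs" and ij: "i < j" "j < length hs" and w: "w \<notin> set hs"
    and e: "{w, hs!i} \<in> E" "{w, hs!j} \<in> E"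
  shows "\<exists>c\<in>graph_circuits E. {w, hs!i} \<in> c \<and> {w, hs!j} \<in> c \<and>
           c \<subseteq> cycle_edges hs \<union> {{w, hs!i}, {w, hs!j}}"
proof -
  let ?H = "cycle_edges hs" and ?X = "cycle_edges hs \<union> {{w, hs!i}, {w, hs!j}}"
  define cl where "cl = w # take (j - i + 1) (drop i hs)"
  have lcl: "length cl = j - i + 2" using ij unfolding cl_def by simp
  have clk: "cl!(Suc k) = hs!(i+k)" if "k \<le> j - i" for k using that ij unfolding cl_def by simp
  have cl0: "cl!0 = w" unfolding cl_def by simp
  have dh: "distinct hs" using hs by (simp add: cycle_walk_def)
  have "w \<notin> set (take (j - i + 1) (drop i hs))" using w
    by (meson in_set_dropD in_set_takeD)
  then have "cycle_walk E cl \<and> cycle_edges cl \<subseteq> ?X"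
  proof (intro cyc_intro)
    assume wn: "w \<notin> set (take (j - i + 1) (drop i hs))"
    show "distinct cl" using dh wn unfolding cl_def by simp
    show "3 \<le> length cl" using lcl ij by simp
    show "\<forall>k. Suc k < length cl \<longrightarrow> {cl ! k, cl ! Suc k} \<in> ?X"
    proof (intro allI impI)
      fix k assume k: "Suc k < length cl"
      show "{cl ! k, cl ! Suc k} \<in> ?X"
      proof (cases k)
        case 0 then show ?thesis using cl0 clk[of 0] by simp
      next
        case (Suc k')
        then have "cl!k = hs!(i+k')" "cl!Suc k = hs!(i+k'+1)" using clk[of k'] clk[of "Suc k'"] k lcl by simp_all
        moreover have "i + k' + 1 < length hs" using k lcl ij Suc by simp
        ultimately show ?thesis using cyc_edge_mem[of "i+k'" hs] by simp
      qed
    qed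
    show "{cl ! (length cl - 1), cl ! 0} \<in> ?X"
      using clk[of "j - i"] cl0 lcl ij by (simp add: insert_commute)
    show "?X \<subseteq> E" using cycle_edges_sub[OF hs] e by simp
  qed
  moreover have "{w, hs!i} \<in> cycle_edges cl"
    using cyc_edge_mem[of 0 cl] cl0 clk[of 0] lcl by simp
  moreover have "{w, hs!j} \<in> cycle_edges cl"
  proof -
    have "cl \<noteq> []" using lcl by (cases cl) auto
    then show ?thesis using cyc_edge_last[of cl] clk[of "j - i"] cl0 lcl ij by (simp add: insert_commute)
  qed
  ultimately show ?thesis unfolding graph_circuits_def by blast
qed

lemma star_cycle:
  assumes hs: "cycle_walk E hs" and w: "w \<notin> set hs" and ab: "a \<in> set hs" "b \<in> set hs" "a \<noteq> b"
    and e: "{w, a} \<in> E" "{w, b} \<in> E"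
  shows "\<exists>c\<in>graph_circuits E. {w, a} \<in> c \<and> {w, b} \<in> c \<and>
           c \<subseteq> cycle_edges hs \<union> {{w, a}, {w, b}}"
proof -
  obtain i j where ij: "i < length hs" "j < length hs" "hs!i = a" "hs!j = b"
    using ab by (auto simp: in_set_conv_nth)
  have "i \<noteq> j" using ij ab(3) by auto
  then show ?thesis
  proof (cases "i < j")
    case True then show ?thesis using star_cycle0[OF hs True ij(2) w] e ij by simp
  next
    case False
    then have "j < i" using \<open>i \<noteq> j\<close> by simp
    then show ?thesis using star_cycle0[OF hs \<open>j < i\<close> ij(1) w] e ij by (auto simp: insert_commute)
  qed
qed

lemma symd_sub: "symd M \<subseteq> \<Union>(set_mset M)"
  by (induction M) (auto simp: symd_add)

lemma card_symdiff_parity: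
  assumes "finite A" "finite B"
  shows "even (card ((A - B) \<union> (B - A))) \<longleftrightarrow> (even (card A) \<longleftrightarrow> even (card B))"
proof -
  have "card ((A - B) \<union> (B - A)) + 2 * card (A \<inter> B) = card A + card B"
  proof -
    have "card (A \<union> B) = card ((A - B) \<union> (B - A)) + card (A \<inter> B)"
    proof -
      have "A \<union> B = ((A - B) \<union> (B - A)) \<union> (A \<inter> B)" by blast
      moreover have "((A - B) \<union> (B - A)) \<inter> (A \<inter> B) = {}" by blast
      ultimately show ?thesis using assms by (metis card_Un_disjoint finite_Int finite_UnI finite_Diff)
    qed
    moreover have "card (A \<union> B) + card (A \<inter> B) = card A + card B" using card_Un_Int[OF assms] by simp
    ultimately show ?thesis by simp
  qed
  then show ?thesis by presburger
qed

lemma symd_even: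
  assumes "set_mset Ms \<subseteq> graph_circuits E" "finite E"
  shows "even (card {e \<in> symd Ms. u \<in> e})"
  using assms(1)
proof (induction Ms)
  case empty then show ?case by simp
next
  case (add C M)
  have C: "C \<in> graph_circuits E" and M: "set_mset M \<subseteq> graph_circuits E" using add.prems by auto
  obtain vs where vs: "cycle_walk E vs" "C = cycle_edges vs" using C by (auto simp: graph_circuits_def)
  have evC: "even (card {e \<in> C. u \<in> e})" using cycle_even[OF vs(1)] vs(2) by simp
  have CE: "C \<subseteq> E" using gc_sub[OF C] .
  have SE: "symd M \<subseteq> E" using symd_sub[of M] M gc_sub by blast
  have fin: "finite {e \<in> C. u \<in> e}" "finite {e \<in> symd M. u \<in> e}"
    using CE SE assms(2) by (auto intro: finite_subset)
  have eq: "{e \<in> symd (add_mset C M). u \<in> e} =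
      ({e \<in> C. u \<in> e} - {e \<in> symd M. u \<in> e}) \<union> ({e \<in> symd M. u \<in> e} - {e \<in> C. u \<in> e})"
    by (auto simp: symd_add)
  show ?case unfolding eq using card_symdiff_parity[OF fin] evC add.IH[OF M] by simp
qed

lemma symd_image:
  assumes "inj_on f E" "\<forall>C\<in>#M. C \<subseteq> E"
  shows "f ` symd M = symd (image_mset ((`) f) M)"
  using assms(2)
proof (induction M)
  case empty then show ?case by simp
next
  case (add C M)
  have CE: "C \<subseteq> E" and ME: "\<forall>C\<in>#M. C \<subseteq> E" using add.prems by auto
  have SE: "symd M \<subseteq> E" using symd_sub[of M] ME by blast
  have "f ` symd (add_mset C M) = (f ` C - f ` symd M) \<union> (f ` symd M - f ` C)"
  proof -
    have "C - symd M \<subseteq> E" "symd M - C \<subseteq> E" using CE SE by auto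
    then have "f ` (C - symd M) = f ` C - f ` symd M" "f ` (symd M - C) = f ` symd M - f ` C"
      using inj_on_image_set_diff[OF assms(1) _ SE] inj_on_image_set_diff[OF assms(1) _ CE] by auto
    then show ?thesis by (simp add: symd_add image_Un)
  qed
  then show ?case using add.IH[OF ME] by (simp add: symd_add)
qed

lemma aux_chord: "S - H = A \<Longrightarrow> X - H = {e} \<Longrightarrow> e \<notin> A \<Longrightarrow> ((X - S) \<union> (S - X)) - H = insert e A"
  by auto

lemma symd_img_chord:
  assumes "finite A" "A \<inter> H = {}" "\<forall>e\<in>A. e \<in> c e \<and> c e \<subseteq> H \<union> {e}"
  shows "symd (image_mset c (mset_set A)) - H = A"
  using assms
proof (induction A rule: finite_induct)
  case empty then show ?case by simp
next
  case (insert e A)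
  have IH: "symd (image_mset c (mset_set A)) - H = A" using insert.prems by (intro insert.IH) auto
  have "e \<in> c e" "c e \<subseteq> H \<union> {e}" "e \<notin> H" using insert.prems by auto
  then have ce: "c e - H = {e}" by blast
  have "symd (image_mset c (mset_set (insert e A))) = (c e - symd (image_mset c (mset_set A))) \<union> (symd (image_mset c (mset_set A)) - c e)"
    using insert.hyps by (simp add: symd_add)
  then show ?case using aux_chord[OF IH ce insert.hyps(2)] by simp
qed

lemma aux_star0: "S - H = B \<Longrightarrow> X - H = {s0, s} \<Longrightarrow> s \<notin> B \<Longrightarrow> s0 \<notin> B \<Longrightarrow> s \<noteq> s0 \<Longrightarrow>
   ((X - S) \<union> (S - X)) - H = insert s B \<union> {s0}"
  by auto

lemma aux_star1: "S - H = B \<union> {s0} \<Longrightarrow> X - H = {s0, s} \<Longrightarrow> s \<notin> B \<Longrightarrow> s0 \<notin> B \<Longrightarrow> s \<noteq> s0 \<Longrightarrow>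
   ((X - S) \<union> (S - X)) - H = insert s B"
  by auto

lemma symd_img_star:
  assumes "finite B" "s0 \<notin> B" "s0 \<notin> H" "B \<inter> H = {}" "\<forall>s\<in>B. s \<in> c s \<and> s0 \<in> c s \<and> c s \<subseteq> H \<union> {s0, s}"
  shows "symd (image_mset c (mset_set B)) - H = B \<union> (if odd (card B) then {s0} else {})"
  using assms
proof (induction B rule: finite_induct)
  case empty then show ?case by simp
next
  case (insert s B)
  have IH: "symd (image_mset c (mset_set B)) - H = B \<union> (if odd (card B) then {s0} else {})"
    using insert.prems by (intro insert.IH) auto
  have "s \<in> c s" "s0 \<in> c s" "c s \<subseteq> H \<union> {s0, s}" "s \<notin> H" "s0 \<notin> H" "s \<noteq> s0" "s0 \<notin> B"
    using insert.prems by auto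
  then have cs: "c s - H = {s0, s}" by blast
  have eq: "symd (image_mset c (mset_set (insert s B))) = (c s - symd (image_mset c (mset_set B))) \<union> (symd (image_mset c (mset_set B)) - c s)"
    using insert.hyps by (simp add: symd_add)
  have cd: "card (insert s B) = Suc (card B)" using insert.hyps by simp
  show ?case
  proof (cases "odd (card B)")
    case True
    then have "symd (image_mset c (mset_set B)) - H = B \<union> {s0}" using IH by simp
    from aux_star1[OF this cs insert.hyps(2) \<open>s0 \<notin> B\<close> \<open>s \<noteq> s0\<close>] show ?thesis
      unfolding eq cd using True by simp
  next
    case False
    then have "symd (image_mset c (mset_set B)) - H = B" using IH by simp
    from aux_star0[OF this cs insert.hyps(2) \<open>s0 \<notin> B\<close> \<open>s \<noteq> s0\<close>] show ?thesis
      unfolding eq cd using False by simp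
  qed
qed

lemma aux_plus: "S1 - H = A \<Longrightarrow> S2 - H = St \<Longrightarrow> A \<inter> St = {} \<Longrightarrow>
   ((S1 - S2) \<union> (S2 - S1)) - H = A \<union> St"
  by auto

lemma reduce:
  assumes hs: "cycle_walk E hs" and G: "graph V E" and XE: "X \<subseteq> E"
    and St: "St \<subseteq> X" "St \<inter> cycle_edges hs = {}" and chords: "\<forall>e\<in>X - St. e \<subseteq> set hs"
    and star: "St = {} \<or> (\<exists>w. w \<notin> set hs \<and> even (card St) \<and> (\<forall>s\<in>St. \<exists>a. s = {w, a} \<and> a \<in> set hs))"
  shows "\<exists>Ms. set_mset Ms \<subseteq> graph_circuits E \<and> (X - symd Ms) \<union> (symd Ms - X) \<subseteq> cycle_edges hs"
proof -
  define H where "H = cycle_edges hs"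
  define A where "A = X - St - H"
  have finE: "finite E" using graph_finE[OF G] .
  have finA: "finite A" using finE XE unfolding A_def by (meson Diff_subset finite_subset subset_trans)
  have "\<forall>e\<in>A. \<exists>c\<in>graph_circuits E. e \<in> c \<and> c \<subseteq> H \<union> {e}"
  proof
    fix e assume e: "e \<in> A"
    then have eE: "e \<in> E" and eh: "e \<subseteq> set hs" and eH: "e \<notin> H" using XE chords unfolding A_def by auto
    obtain a b where ab: "a \<noteq> b" "e = {a, b}" using graph_edge[OF G eE] by blast
    show "\<exists>c\<in>graph_circuits E. e \<in> c \<and> c \<subseteq> H \<union> {e}"
      using chord_cycle[OF hs eE ab(2) ab(1)] ab eh eH unfolding H_def by auto
  qed
  then have "\<exists>ce. \<forall>e\<in>A. ce e \<in> graph_circuits E \<and> e \<in> ce e \<and> ce e \<subseteq> H \<union> {e}"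
    unfolding Bex_def by (rule bchoice)
  then obtain ce where ce: "\<forall>e\<in>A. ce e \<in> graph_circuits E \<and> e \<in> ce e \<and> ce e \<subseteq> H \<union> {e}"
    by blast
  define Ms1 where "Ms1 = image_mset ce (mset_set A)"
  have Ms1: "set_mset Ms1 \<subseteq> graph_circuits E" using ce finA unfolding Ms1_def by auto
  have S1: "symd Ms1 - H = A" unfolding Ms1_def
    by (rule symd_img_chord[OF finA]) (use ce in \<open>auto simp: A_def\<close>)
  show ?thesis
  proof (cases "St = {}")
    case True
    have "X - H = symd Ms1 - H" using S1 True unfolding A_def by simp
    then have "(X - symd Ms1) \<union> (symd Ms1 - X) \<subseteq> H" by auto
    then show ?thesis using Ms1 unfolding H_def by blast
  next
    case False
    then obtain w where w: "w \<notin> set hs" "even (card St)" "\<forall>s\<in>St. \<exists>a. s = {w, a} \<and> a \<in> set hs"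
      using star by blast
    obtain s0 where s0: "s0 \<in> St" using False by blast
    obtain a0 where a0: "s0 = {w, a0}" "a0 \<in> set hs" using w(3) s0 by blast
    have "\<forall>s\<in>St - {s0}. \<exists>c\<in>graph_circuits E. s \<in> c \<and> s0 \<in> c \<and> c \<subseteq> H \<union> {s0, s}"
    proof
      fix s assume s: "s \<in> St - {s0}"
      obtain a where a: "s = {w, a}" "a \<in> set hs" using w(3) s by blast
      have "a \<noteq> a0" using a a0 s by auto
      moreover have "{w, a0} \<in> E" "{w, a} \<in> E" using a0 a s s0 St XE by auto
      ultimately obtain c where "c\<in>graph_circuits E" "{w, a0} \<in> c" "{w, a} \<in> c"
          "c \<subseteq> cycle_edges hs \<union> {{w, a0}, {w, a}}"
        using star_cycle[OF hs w(1) a0(2) a(2)] by metis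
      then show "\<exists>c\<in>graph_circuits E. s \<in> c \<and> s0 \<in> c \<and> c \<subseteq> H \<union> {s0, s}"
        using a a0 unfolding H_def by blast
    qed
    then have "\<exists>cs. \<forall>s\<in>St - {s0}. cs s \<in> graph_circuits E \<and> s \<in> cs s \<and> s0 \<in> cs s \<and> cs s \<subseteq> H \<union> {s0, s}"
      unfolding Bex_def by (rule bchoice)
    then obtain cs where cs: "\<forall>s\<in>St - {s0}. cs s \<in> graph_circuits E \<and> s \<in> cs s \<and> s0 \<in> cs s \<and> cs s \<subseteq> H \<union> {s0, s}"
      by blast
    define B where "B = St - {s0}"
    have finSt: "finite St" using finE XE St(1) by (meson finite_subset subset_trans)
    have finB: "finite B" using finSt unfolding B_def by simp
    have "card B = card St - 1" unfolding B_def using card_Diff_singleton[OF s0] .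
    moreover have "card St > 0" using finSt s0 card_gt_0_iff by blast
    ultimately have oddB: "odd (card B)" using w(2) by presburger
    define Ms2 where "Ms2 = image_mset cs (mset_set B)"
    have Ms2: "set_mset Ms2 \<subseteq> graph_circuits E" using cs finB unfolding Ms2_def B_def by auto
    have S2: "symd Ms2 - H = B \<union> {s0}" unfolding Ms2_def
      using symd_img_star[OF finB, of s0 H cs] oddB cs St(2) s0 unfolding B_def H_def by auto
    have S2': "symd Ms2 - H = St" using S2 s0 unfolding B_def by auto
    have XH: "X - H = A \<union> St" using St unfolding A_def H_def by auto
    have AS: "A \<inter> St = {}" unfolding A_def by auto
    have "symd (Ms1 + Ms2) - H = X - H"
      unfolding symd_plus XH using aux_plus[OF S1 S2' AS] .
    then have "(X - symd (Ms1 + Ms2)) \<union> (symd (Ms1 + Ms2) - X) \<subseteq> H" by auto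
    moreover have "set_mset (Ms1 + Ms2) \<subseteq> graph_circuits E" using Ms1 Ms2 by auto
    ultimately show ?thesis unfolding H_def by blast
  qed
qed

lemma handshake:
  assumes G: "graph V E" and XE: "X \<subseteq> E"
  shows "(\<Sum>u\<in>V. card {e\<in>X. u\<in>e}) = 2 * card X"
proof -
  have finV: "finite V" using G by (simp add: graph_def)
  have finX: "finite X" using graph_finE[OF G] XE finite_subset by blast
  have 1: "card {e\<in>X. u\<in>e} = (\<Sum>e\<in>X. of_bool (u\<in>e))" for u
  proof -
    have "(\<Sum>e\<in>X. of_bool (u\<in>e)) = card (X \<inter> {e. u \<in> e})" using finX by simp
    also have "X \<inter> {e. u \<in> e} = {e\<in>X. u\<in>e}" by blast
    finally show ?thesis by simp
  qed
  have 2: "(\<Sum>u\<in>V. of_bool (u\<in>e)) = (2::nat)" if eX: "e \<in> X" for e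
  proof -
    have "e \<in> E" using eX XE by blast
    then obtain a b where ab: "a \<noteq> b" "a \<in> V" "b \<in> V" "e = {a, b}" using graph_edge[OF G] by blast
    have "(\<Sum>u\<in>V. of_bool (u\<in>e)) = card (V \<inter> {u. u \<in> e})" using finV by simp
    also have "V \<inter> {u. u \<in> e} = {a, b}" using ab by auto
    finally show ?thesis using ab(1) by simp
  qed
  have "(\<Sum>u\<in>V. card {e\<in>X. u\<in>e}) = (\<Sum>u\<in>V. \<Sum>e\<in>X. of_bool (u\<in>e))" using 1 by simp
  also have "\<dots> = (\<Sum>e\<in>X. \<Sum>u\<in>V. of_bool (u\<in>e))" by (rule sum.swap)
  also have "\<dots> = (\<Sum>e\<in>X. 2)" using 2 by simp
  also have "\<dots> = 2 * card X" by simp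
  finally show ?thesis .
qed

lemma exists_even_vertex:
  assumes G: "graph V E" and XE: "X \<subseteq> E" and odd: "odd (card V)"
  shows "\<exists>w\<in>V. even (card {e\<in>X. w\<in>e})"
proof (rule ccontr)
  assume "\<not> ?thesis"
  then have all: "{u\<in>V. odd (card {e\<in>X. u\<in>e})} = V" by blast
  have finV: "finite V" using G by (simp add: graph_def)
  have "even (\<Sum>u\<in>V. card {e\<in>X. u\<in>e})" using handshake[OF G XE] by simp
  then have "even (card {u\<in>V. odd (card {e\<in>X. u\<in>e})})"
    using even_sum_iff[OF finV, of "\<lambda>u. card {e\<in>X. u\<in>e}"] by simp
  then show False using all odd by simp
qed

lemma aux_inv: "(X - S) \<union> (S - X) = C \<Longrightarrow> X = (C - S) \<union> (S - C)"
  by auto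

lemma aux_inv0: "(X - S) \<union> (S - X) = {} \<Longrightarrow> X = S"
  by auto

lemma final:
  assumes G: "graph V E" and inj: "inj_on f E"
    and cl: "\<forall>M. set_mset M \<subseteq> \<C> \<longrightarrow> (\<exists>F\<subseteq>\<C>. pairwise disjnt F \<and> \<Union>F = symd M)"
    and I: "\<forall>A\<in>\<C>. \<forall>B\<in>\<C>. A \<subseteq> B \<longrightarrow> A = B"
    and gcC: "\<forall>c\<in>graph_circuits E. f ` c \<in> \<C>"
    and XE: "X \<subseteq> E" and XC: "f ` X \<in> \<C>" and bad: "\<forall>c\<in>graph_circuits E. f ` X \<noteq> f ` c"
    and Xne: "X \<noteq> {}"
    and C: "C \<in> graph_circuits E" and Ms: "set_mset Ms \<subseteq> graph_circuits E"
    and sub: "(X - symd Ms) \<union> (symd Ms - X) \<subseteq> C"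
  shows False
proof -
  have finE: "finite E" using graph_finE[OF G] .
  have noeven: "\<not> (\<forall>u. even (card {e\<in>X. u\<in>e}))"
  proof
    assume "\<forall>u. even (card {e\<in>X. u\<in>e})"
    then obtain vs where vs: "cycle_walk E vs" "cycle_edges vs \<subseteq> X"
      using even_has_cycle[OF G XE Xne] by blast
    have c: "cycle_edges vs \<in> graph_circuits E" using vs(1) unfolding graph_circuits_def by blast
    have "f ` cycle_edges vs \<subseteq> f ` X" using vs(2) by (rule image_mono)
    moreover have "f ` cycle_edges vs \<in> \<C>" using gcC c by blast
    ultimately have "f ` cycle_edges vs = f ` X" using I XC by blast
    moreover have "f ` X \<noteq> f ` cycle_edges vs" using bad c by blast
    ultimately show False by simp
  qed
  define Y where "Y = (X - symd Ms) \<union> (symd Ms - X)"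
  have SE: "symd Ms \<subseteq> E" using symd_sub[of Ms] Ms gc_sub by blast
  have CE: "C \<subseteq> E" using gc_sub[OF C] .
  have YC: "Y \<subseteq> C" using sub unfolding Y_def .
  obtain vC where vC: "cycle_walk E vC" "C = cycle_edges vC" using C by (auto simp: graph_circuits_def)
  show False
  proof (cases "Y = {}")
    case True
    then have "X = symd Ms" unfolding Y_def by (rule aux_inv0)
    then show False using noeven symd_even[OF Ms finE] by simp
  next
    case Yne: False
    show False
    proof (cases "Y = C")
      case True
      have "X = symd (add_mset C Ms)" using aux_inv[of X "symd Ms" C] True unfolding Y_def symd_add by simp
      moreover have "set_mset (add_mset C Ms) \<subseteq> graph_circuits E" using Ms C by simp
      ultimately show False using noeven symd_even[OF _ finE, of "add_mset C Ms"] by simp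
    next
      case YneC: False
      define M where "M = add_mset (f ` X) (image_mset ((`) f) Ms)"
      have MC: "set_mset M \<subseteq> \<C>" unfolding M_def using XC Ms gcC by auto
      have "\<forall>C\<in>#Ms. C \<subseteq> E" using Ms gc_sub by blast
      from symd_image[OF inj this] have "symd (image_mset ((`) f) Ms) = f ` symd Ms" by simp
      then have "symd M = (f ` X - f ` symd Ms) \<union> (f ` symd Ms - f ` X)"
        unfolding M_def symd_add by simp
      also have "\<dots> = f ` Y"
      proof -
        have "X - symd Ms \<subseteq> E" "symd Ms - X \<subseteq> E" using XE SE by auto
        then have "f ` (X - symd Ms) = f ` X - f ` symd Ms" "f ` (symd Ms - X) = f ` symd Ms - f ` X"
          using inj_on_image_set_diff[OF inj _ SE] inj_on_image_set_diff[OF inj _ XE] by auto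
        then show ?thesis unfolding Y_def image_Un by simp
      qed
      finally have sM: "symd M = f ` Y" .
      have "\<exists>F\<subseteq>\<C>. pairwise disjnt F \<and> \<Union>F = symd M" using cl MC by blast
      then obtain F where F: "F \<subseteq> \<C>" "pairwise disjnt F" "\<Union>F = f ` Y" unfolding sM by blast
      obtain y where "y \<in> Y" using Yne by blast
      then have "f y \<in> \<Union>F" using F(3) by simp
      then obtain K where K: "K \<in> F" "f y \<in> K" by blast
      have KY: "K \<subseteq> f ` Y" using K(1) F(3) by blast
      have "f ` Y \<subseteq> f ` C" using YC by (rule image_mono)
      then have "K \<subseteq> f ` C" using KY by blast
      moreover have "K \<in> \<C>" "f ` C \<in> \<C>" using K(1) F(1) gcC C by auto
      ultimately have "K = f ` C" using I by blast
      then have "f ` C \<subseteq> f ` Y" using KY by simp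
      then have "C \<subseteq> Y"
      proof -
        assume h: "f ` C \<subseteq> f ` Y"
        show "C \<subseteq> Y"
        proof
          fix x assume "x \<in> C"
          then have "f x \<in> f ` Y" "x \<in> E" using h CE by auto
          then show "x \<in> Y" using inj_on_image_mem_iff[OF inj \<open>x \<in> E\<close>, of Y] YC CE by auto
        qed
      qed
      then show False using YC YneC by blast
    qed
  qed
qed

lemma core:
  assumes G: "graph V E" and inj: "inj_on f E" and fE: "f ` E = S"
    and cl: "\<forall>M. set_mset M \<subseteq> \<C> \<longrightarrow> (\<exists>F\<subseteq>\<C>. pairwise disjnt F \<and> \<Union>F = symd M)"
    and I: "\<forall>A\<in>\<C>. \<forall>B\<in>\<C>. A \<subseteq> B \<longrightarrow> A = B"
    and gcC: "\<forall>c\<in>graph_circuits E. f ` c \<in> \<C>"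
    and D: "D \<in> \<C>" "D \<subseteq> S" and badD: "\<forall>c\<in>graph_circuits E. D \<noteq> f ` c"
    and hs: "cycle_walk E hs"
    and cover: "V \<subseteq> set hs \<or> (\<exists>w. w \<notin> set hs \<and> V - {w} \<subseteq> set hs \<and> even (card {e\<in>{e\<in>E. f e \<in> D}. w\<in>e}))"
  shows False
proof -
  define X where "X = {e\<in>E. f e \<in> D}"
  have XE: "X \<subseteq> E" unfolding X_def by blast
  have fX: "f ` X = D"
  proof
    show "f ` X \<subseteq> D" unfolding X_def by blast
    show "D \<subseteq> f ` X"
    proof
      fix d assume "d \<in> D"
      then have "d \<in> f ` E" using D(2) fE by blast
      then obtain e where "e \<in> E" "d = f e" by blast
      then show "d \<in> f ` X" using \<open>d \<in> D\<close> unfolding X_def by blast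
    qed
  qed
  have Hc: "cycle_edges hs \<in> graph_circuits E" using hs unfolding graph_circuits_def by blast
  have Xne: "X \<noteq> {}"
  proof
    assume "X = {}"
    then have "D = {}" using fX by simp
    then have "D \<subseteq> f ` cycle_edges hs" by simp
    moreover have "f ` cycle_edges hs \<in> \<C>" using gcC Hc by blast
    ultimately have "D = f ` cycle_edges hs" using I D(1) by blast
    then show False using badD Hc by blast
  qed
  have bad: "\<forall>c\<in>graph_circuits E. f ` X \<noteq> f ` c" using badD fX by simp
  have XC: "f ` X \<in> \<C>" using fX D(1) by simp
  have "\<exists>Ms. set_mset Ms \<subseteq> graph_circuits E \<and> (X - symd Ms) \<union> (symd Ms - X) \<subseteq> cycle_edges hs"
  proof (cases "V \<subseteq> set hs")
    case True
    show ?thesis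
    proof (rule reduce[OF hs G XE, of "{}"])
      show "\<forall>e\<in>X - {}. e \<subseteq> set hs"
      proof
        fix e assume "e \<in> X - {}"
        then have "e \<in> E" using XE by blast
        then obtain a b where "a \<in> V" "b \<in> V" "e = {a, b}" using graph_edge[OF G] by blast
        then show "e \<subseteq> set hs" using True by blast
      qed
    qed simp_all
  next
    case False
    then obtain w where w: "w \<notin> set hs" "V - {w} \<subseteq> set hs" "even (card {e\<in>X. w\<in>e})"
      using cover unfolding X_def by blast
    define St where "St = {e\<in>X. w\<in>e}"
    have HS: "\<Union>(cycle_edges hs) = set hs" by (rule cv_set[OF hs])
    show ?thesis
    proof (rule reduce[OF hs G XE, of St])
      show "St \<subseteq> X" unfolding St_def by blast
      show "St \<inter> cycle_edges hs = {}"
      proof (rule ccontr)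
        assume "St \<inter> cycle_edges hs \<noteq> {}"
        then obtain e where "e \<in> St" "e \<in> cycle_edges hs" by blast
        then have "w \<in> e" "e \<subseteq> set hs" using HS unfolding St_def by auto
        then show False using w(1) by blast
      qed
      show "\<forall>e\<in>X - St. e \<subseteq> set hs"
      proof
        fix e assume e: "e \<in> X - St"
        then have "e \<in> E" "w \<notin> e" using XE unfolding St_def by auto
        moreover obtain a b where "a \<in> V" "b \<in> V" "e = {a, b}" using graph_edge[OF G \<open>e \<in> E\<close>] by blast
        ultimately show "e \<subseteq> set hs" using w(2) by blast
      qed
      have "\<forall>s\<in>St. \<exists>a. s = {w, a} \<and> a \<in> set hs"
      proof
        fix s assume s: "s \<in> St"
        then have "s \<in> E" "w \<in> s" using XE unfolding St_def by auto
        then obtain a b where ab: "a \<noteq> b" "a \<in> V" "b \<in> V" "s = {a, b}" using graph_edge[OF G] by blast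
        show "\<exists>a. s = {w, a} \<and> a \<in> set hs"
        proof (cases "a = w")
          case True
          then have "b \<in> V - {w}" using ab by auto
          then show ?thesis using ab True w(2) by blast
        next
          case False
          then have "b = w" using ab \<open>w \<in> s\<close> by auto
          moreover have "a \<in> V - {w}" using ab False by auto
          ultimately show ?thesis using ab w(2) by (auto simp: insert_commute)
        qed
      qed
      then show "St = {} \<or> (\<exists>w. w \<notin> set hs \<and> even (card St) \<and> (\<forall>s\<in>St. \<exists>a. s = {w, a} \<and> a \<in> set hs))"
        using w(1,3) unfolding St_def by blast
    qed
  qed
  then obtain Ms where Ms: "set_mset Ms \<subseteq> graph_circuits E" "(X - symd Ms) \<union> (symd Ms - X) \<subseteq> cycle_edges hs"
    by blast
  show False by (rule final[OF G inj cl I gcC XE XC bad Xne Hc Ms])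
qed

lemma no_inj:
  assumes G: "graph V E" and B: "binary_matroid S \<C>" and N: "nontrivial_circuit_injection E f S \<C>"
    and cov: "\<And>D. D \<subseteq> S \<Longrightarrow> \<exists>hs. cycle_walk E hs \<and> (V \<subseteq> set hs \<or>
       (\<exists>w. w \<notin> set hs \<and> V - {w} \<subseteq> set hs \<and> even (card {e\<in>{e\<in>E. f e \<in> D}. w\<in>e})))"
  shows False
proof -
  have CS: "\<C> \<subseteq> Pow S" and I: "\<forall>A\<in>\<C>. \<forall>B\<in>\<C>. A \<subseteq> B \<longrightarrow> A = B"
    and bin: "\<forall>A\<in>\<C>. \<forall>B\<in>\<C>. \<exists>F\<subseteq>\<C>. pairwise disjnt F \<and> \<Union>F = (A - B) \<union> (B - A)"
    using B unfolding binary_matroid_def matroid_def by auto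
  have bij: "bij_betw f E S" and gcC: "\<forall>c\<in>graph_circuits E. f ` c \<in> \<C>"
    and nt: "\<exists>D\<in>\<C>. \<forall>c\<in>graph_circuits E. D \<noteq> f ` c"
    using N unfolding nontrivial_circuit_injection_def circuit_injection_def by auto
  have inj: "inj_on f E" and fE: "f ` E = S" using bij by (auto simp: bij_betw_def)
  have finS: "finite S" using graph_finE[OF G] fE by blast
  have finC: "finite \<C>" using CS finS by (meson finite_Pow_iff finite_subset)
  have fin: "\<forall>C\<in>\<C>. finite C" using CS finS by (meson PowD finite_subset subsetD)
  have cl: "\<forall>M. set_mset M \<subseteq> \<C> \<longrightarrow> (\<exists>F\<subseteq>\<C>. pairwise disjnt F \<and> \<Union>F = symd M)"
    using binary_closure[OF finC fin bin] by blast
  obtain D where D: "D \<in> \<C>" "\<forall>c\<in>graph_circuits E. D \<noteq> f ` c" using nt by blast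
  have DS: "D \<subseteq> S" using D(1) CS by blast
  obtain hs where hs: "cycle_walk E hs" "V \<subseteq> set hs \<or>
       (\<exists>w. w \<notin> set hs \<and> V - {w} \<subseteq> set hs \<and> even (card {e\<in>{e\<in>E. f e \<in> D}. w\<in>e}))"
    using cov[OF DS] by blast
  show False by (rule core[OF G inj fE cl I gcC D(1) DS D(2) hs])
qed

theorem lemma2p3:
  fixes V :: "'a set" and E :: "'a set set" and N :: nat
  assumes "graph V E" and "no_isolated_vertices V E"
  shows "(card V = 2 * N + 1 \<and> almost_hamiltonian V E \<longrightarrow>
           \<not> (\<exists>(S :: 'b set) \<C> (f :: 'a set \<Rightarrow> 'b).
                 binary_matroid S \<C> \<and> nontrivial_circuit_injection E f S \<C>)) \<and>
         (card V = 2 * N \<and> hamiltonian V E \<longrightarrow>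
           \<not> (\<exists>(S :: 'b set) \<C> (f :: 'a set \<Rightarrow> 'b).
                 binary_matroid S \<C> \<and> nontrivial_circuit_injection E f S \<C>))"
proof (intro conjI impI notI)
  note G = assms(1)
  assume h: "card V = 2 * N + 1 \<and> almost_hamiltonian V E"
  assume "\<exists>(S :: 'b set) \<C> (f :: 'a set \<Rightarrow> 'b). binary_matroid S \<C> \<and> nontrivial_circuit_injection E f S \<C>"
  then obtain S :: "'b set" and \<C> and f :: "'a set \<Rightarrow> 'b" where
    B: "binary_matroid S \<C>" and NI: "nontrivial_circuit_injection E f S \<C>" by blast
  show False
  proof (rule no_inj[OF G B NI])
    fix D assume "D \<subseteq> S"
    define X where "X = {e\<in>E. f e \<in> D}"
    have XE: "X \<subseteq> E" unfolding X_def by blast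
    have "odd (card V)" using h by simp
    then obtain w where w: "w \<in> V" "even (card {e\<in>X. w\<in>e})" using exists_even_vertex[OF G XE] by blast
    have "card (V - {w}) = card V - 1" using w(1) by (rule card_Diff_singleton)
    moreover have "V - {w} \<subseteq> V" by blast
    ultimately obtain C where C: "C \<in> graph_circuits E" "V - {w} \<subseteq> circuit_vertices C"
      using h unfolding almost_hamiltonian_def by blast
    then obtain hs where hs: "cycle_walk E hs" "C = cycle_edges hs" by (auto simp: graph_circuits_def)
    have cov: "V - {w} \<subseteq> set hs" using C(2) cv_set[OF hs(1)] hs(2) unfolding circuit_vertices_def by simp
    show "\<exists>hs. cycle_walk E hs \<and> (V \<subseteq> set hs \<or>
       (\<exists>w. w \<notin> set hs \<and> V - {w} \<subseteq> set hs \<and> even (card {e\<in>{e\<in>E. f e \<in> D}. w\<in>e})))"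
    proof (cases "w \<in> set hs")
      case True
      then have "V \<subseteq> set hs" using cov by blast
      then show ?thesis using hs(1) by blast
    next
      case False
      then show ?thesis using hs(1) cov w(2) unfolding X_def by blast
    qed
  qed
next
  note G = assms(1)
  assume h: "card V = 2 * N \<and> hamiltonian V E"
  assume "\<exists>(S :: 'b set) \<C> (f :: 'a set \<Rightarrow> 'b). binary_matroid S \<C> \<and> nontrivial_circuit_injection E f S \<C>"
  then obtain S :: "'b set" and \<C> and f :: "'a set \<Rightarrow> 'b" where
    B: "binary_matroid S \<C>" and NI: "nontrivial_circuit_injection E f S \<C>" by blast
  obtain C where C: "C \<in> graph_circuits E" "V \<subseteq> circuit_vertices C"
    using h unfolding hamiltonian_def by blast
  then obtain hs where hs: "cycle_walk E hs" "C = cycle_edges hs" by (auto simp: graph_circuits_def)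
  have cov: "V \<subseteq> set hs" using C(2) cv_set[OF hs(1)] hs(2) unfolding circuit_vertices_def by simp
  show False
    by (rule no_inj[OF G B NI]) (use hs(1) cov in blast)
qed

end
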